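(* Let $\mathbb{F}$ be an infinite field. Let $I,J,K,I',J',K'$ be finite sets, $\Phi\subseteq I\times J\times K$, and let $f:I\to I'$, $g:J\to J'$, $h:K\to K'$ be functions. Then $R_s(\Phi)\ge R_s((f\times g\times h)(\Phi))$.
   Context: A tensor over $\mathbb{F}$ is a trilinear form $T=\sum_{i\in I,j\in J,k\in K} t_{i,j,k}x_iy_jz_k$ in formal variables indexed by finite sets $I,J,K$; its support is $\operatorname{supp}(T)=\{(i,j,k): t_{i,j,k}\neq 0\}$. The rank $R(T)$ is the smallest $L$ such that $T$ is a sum of $L$ products $(\sum_i a_ix_i)(\sum_j b_jy_j)(\sum_k c_kz_k)$ of linear forms. For $\Phi\subseteq I\times J\times K$, the support rank is $R_s(\Phi)=\min\{R(T):\operatorname{supp}(T)=\Phi\}$ (over tensors with coefficients in $\mathbb{F}$). *)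

theory Defs
  imports Main
begin

text \<open>A tensor over field 'a with index sets I, J, K is represented by its coefficient
  function t :: 'i => 'j => 'k => 'a; only the values on I x J x K are relevant.\<close>

definition tsupp :: "'i set \<Rightarrow> 'j set \<Rightarrow> 'k set \<Rightarrow> ('i \<Rightarrow> 'j \<Rightarrow> 'k \<Rightarrow> 'a::zero) \<Rightarrow> ('i \<times> 'j \<times> 'k) set" where
  "tsupp I J K t = {(i,j,k). i \<in> I \<and> j \<in> J \<and> k \<in> K \<and> t i j k \<noteq> 0}"

definition rank_le :: "'i set \<Rightarrow> 'j set \<Rightarrow> 'k set \<Rightarrow> ('i \<Rightarrow> 'j \<Rightarrow> 'k \<Rightarrow> 'a::comm_ring_1) \<Rightarrow> nat \<Rightarrow> bool" where
  "rank_le I J K t L = (\<exists>(a :: nat \<Rightarrow> 'i \<Rightarrow> 'a) (b :: nat \<Rightarrow> 'j \<Rightarrow> 'a) (c :: nat \<Rightarrow> 'k \<Rightarrow> 'a).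
      \<forall>i\<in>I. \<forall>j\<in>J. \<forall>k\<in>K. t i j k = (\<Sum>l<L. a l i * b l j * c l k))"

definition tensor_rank :: "'i set \<Rightarrow> 'j set \<Rightarrow> 'k set \<Rightarrow> ('i \<Rightarrow> 'j \<Rightarrow> 'k \<Rightarrow> 'a::comm_ring_1) \<Rightarrow> nat" where
  "tensor_rank I J K t = (LEAST L. rank_le I J K t L)"

definition support_rank :: "'a::field itself \<Rightarrow> 'i set \<Rightarrow> 'j set \<Rightarrow> 'k set \<Rightarrow> ('i \<times> 'j \<times> 'k) set \<Rightarrow> nat" where
  "support_rank _ I J K \<Phi> =
     (LEAST r. \<exists>t :: 'i \<Rightarrow> 'j \<Rightarrow> 'k \<Rightarrow> 'a. tsupp I J K t = \<Phi> \<and> tensor_rank I J K t = r)"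

end

theory Submission imports Defs "HOL-Computational_Algebra.Polynomial" begin

lemma digits3:
  fixes M a b c a' b' c' :: nat
  assumes "a < M" "a' < M" "b < M" "b' < M"
    and "a + M*b + M*M*c = a' + M*b' + M*M*c'"
  shows "a = a' \<and> b = b' \<and> c = c'"
proof -
  have e1: "a + M*b + M*M*c = a + M*(b + M*c)" "a' + M*b' + M*M*c' = a' + M*(b' + M*c')"
    by (simp_all add: algebra_simps)
  have "(a + M*(b + M*c)) mod M = a" "(a' + M*(b' + M*c')) mod M = a'"
    using assms by simp_all
  then have aa: "a = a'" using assms(5) e1 by metis
  have "(a + M*(b + M*c)) div M = b + M*c" "(a' + M*(b' + M*c')) div M = b' + M*c'"
    using assms by simp_all
  then have "b + M*c = b' + M*c'" using assms(5) e1 by metis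
  moreover have "(b + M*c) mod M = b" "(b' + M*c') mod M = b'" using assms by simp_all
  moreover have "(b + M*c) div M = c" "(b' + M*c') div M = c'" using assms by simp_all
  ultimately show ?thesis using aa by metis
qed

lemma finite_rank:
  fixes t :: "'i \<Rightarrow> 'j \<Rightarrow> 'k \<Rightarrow> 'a::comm_ring_1"
  assumes "finite I" "finite J" "finite K"
  shows "\<exists>L. rank_le I J K t L"
proof -
  have fin: "finite (I \<times> J \<times> K)" using assms by simp
  obtain e where e: "bij_betw e {0..<card (I \<times> J \<times> K)} (I \<times> J \<times> K)"
    using ex_bij_betw_nat_finite[OF fin] by blast
  define a where "a l i = (if i = fst (e l) then t i (fst (snd (e l))) (snd (snd (e l))) else 0)" for l i
  define b :: "nat \<Rightarrow> 'j \<Rightarrow> 'a" where "b l j = (if j = fst (snd (e l)) then 1 else 0)" for l j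
  define c :: "nat \<Rightarrow> 'k \<Rightarrow> 'a" where "c l k = (if k = snd (snd (e l)) then 1 else 0)" for l k
  have "\<forall>i\<in>I. \<forall>j\<in>J. \<forall>k\<in>K. t i j k = (\<Sum>l<card (I \<times> J \<times> K). a l i * b l j * c l k)"
  proof (intro ballI)
    fix i j k assume ijk: "i \<in> I" "j \<in> J" "k \<in> K"
    define g where "g s = (if s = (i,j,k) then t i j k else 0)" for s
    have "(\<Sum>l<card (I \<times> J \<times> K). a l i * b l j * c l k) = (\<Sum>l\<in>{0..<card (I \<times> J \<times> K)}. g (e l))"
      by (rule sum.cong) (auto simp: a_def b_def c_def g_def prod_eq_iff)
    also have "\<dots> = sum g (I \<times> J \<times> K)"
      using sum.reindex_bij_betw[OF e, of g] by simp
    also have "\<dots> = t i j k" using fin ijk by (simp add: g_def)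
    finally show "t i j k = (\<Sum>l<card (I \<times> J \<times> K). a l i * b l j * c l k)" by simp
  qed
  then show ?thesis unfolding rank_le_def by blast
qed


lemma triple_prod:
  fixes X :: "'i \<Rightarrow> 'a::comm_semiring_1"
  shows "sum X A * sum Y B * sum Z C = (\<Sum>i\<in>A. \<Sum>j\<in>B. \<Sum>k\<in>C. X i * Y j * Z k)"
proof -
  have "(\<Sum>i\<in>A. \<Sum>j\<in>B. \<Sum>k\<in>C. X i * Y j * Z k) = (\<Sum>i\<in>A. \<Sum>j\<in>B. X i * Y j * sum Z C)"
    by (simp only: sum_distrib_left)
  also have "\<dots> = (\<Sum>i\<in>A. X i * sum Y B * sum Z C)"
    by (simp only: sum_distrib_left[of "X _"] sum_distrib_right[of _ B])
  also have "\<dots> = sum X A * sum Y B * sum Z C"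
    by (simp only: sum_distrib_right)
  finally show ?thesis by simp
qed

lemma swap4:
  "(\<Sum>l\<in>L. \<Sum>i\<in>A. \<Sum>j\<in>B. \<Sum>k\<in>C. F l i j k) = (\<Sum>i\<in>A. \<Sum>j\<in>B. \<Sum>k\<in>C. \<Sum>l\<in>L. F l i j k)"
proof -
  have "(\<Sum>l\<in>L. \<Sum>i\<in>A. \<Sum>j\<in>B. \<Sum>k\<in>C. F l i j k) = (\<Sum>i\<in>A. \<Sum>l\<in>L. \<Sum>j\<in>B. \<Sum>k\<in>C. F l i j k)"
    by (rule sum.swap)
  also have "\<dots> = (\<Sum>i\<in>A. \<Sum>j\<in>B. \<Sum>l\<in>L. \<Sum>k\<in>C. F l i j k)"
    by (rule sum.cong[OF refl], rule sum.swap)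
  also have "\<dots> = (\<Sum>i\<in>A. \<Sum>j\<in>B. \<Sum>k\<in>C. \<Sum>l\<in>L. F l i j k)"
    by (rule sum.cong[OF refl], rule sum.cong[OF refl], rule sum.swap)
  finally show ?thesis .
qed

lemma key:
  fixes t :: "'i \<Rightarrow> 'j \<Rightarrow> 'k \<Rightarrow> 'a::field"
    and f :: "'i \<Rightarrow> 'i2" and g :: "'j \<Rightarrow> 'j2" and h :: "'k \<Rightarrow> 'k2"
  assumes inf: "infinite (UNIV :: 'a set)"
    and fin: "finite I" "finite J" "finite K" "finite I'" "finite J'" "finite K'"
    and im: "f ` I \<subseteq> I'" "g ` J \<subseteq> J'" "h ` K \<subseteq> K'"
    and rk: "rank_le I J K t L"
  shows "\<exists>t' :: 'i2 \<Rightarrow> 'j2 \<Rightarrow> 'k2 \<Rightarrow> 'a. tsupp I' J' K' t' = (\<lambda>(i,j,k). (f i, g j, h k)) ` tsupp I J K t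
           \<and> rank_le I' J' K' t' L"
proof -
  define M where "M = card I + card J + card K + 1"
  obtain n where n: "bij_betw n I {0..<card I}" using ex_bij_betw_finite_nat[OF fin(1)] by blast
  obtain m where m: "bij_betw m J {0..<card J}" using ex_bij_betw_finite_nat[OF fin(2)] by blast
  obtain p where p: "bij_betw p K {0..<card K}" using ex_bij_betw_finite_nat[OF fin(3)] by blast
  have nM: "\<And>i. i \<in> I \<Longrightarrow> n i < M" proof -
    fix z assume "z \<in> I"
    then have "n z \<in> {0..<card I}" using n unfolding bij_betw_def by blast
    then show "n z < M" unfolding M_def by simp
  qed
  have mM: "\<And>j. j \<in> J \<Longrightarrow> m j < M" proof -
    fix z assume "z \<in> J"
    then have "m z \<in> {0..<card J}" using m unfolding bij_betw_def by blast
    then show "m z < M" unfolding M_def by simp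
  qed
  define A where "A i' = {i \<in> I. f i = i'}" for i'
  define B where "B j' = {j \<in> J. g j = j'}" for j'
  define C where "C k' = {k \<in> K. h k = k'}" for k'
  have finABC: "finite (A i')" "finite (B j')" "finite (C k')" for i' j' k'
    using fin unfolding A_def B_def C_def by auto
  define E where "E i j k = n i + M * m j + M * M * p k" for i j k
  have Einj: "E i j k = E i0 j0 k0 \<longleftrightarrow> (i = i0 \<and> j = j0 \<and> k = k0)"
    if "i \<in> I" "j \<in> J" "k \<in> K" "i0 \<in> I" "j0 \<in> J" "k0 \<in> K" for i j k i0 j0 k0
  proof
    assume "E i j k = E i0 j0 k0"
    then have "n i = n i0 \<and> m j = m j0 \<and> p k = p k0"
      using digits3[of "n i" M "n i0" "m j" "m j0" "p k" "p k0"] nM mM that unfolding E_def by auto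
    then show "i = i0 \<and> j = j0 \<and> k = k0"
      using n m p that unfolding bij_betw_def inj_on_def by blast
  qed simp
  define P where "P i' j' k' = (\<Sum>i\<in>A i'. \<Sum>j\<in>B j'. \<Sum>k\<in>C k'. monom (t i j k) (E i j k))" for i' j' k'
  have coeffP: "coeff (P i' j' k') (E i0 j0 k0) = t i0 j0 k0"
    if "i0 \<in> A i'" "j0 \<in> B j'" "k0 \<in> C k'" for i' j' k' i0 j0 k0
  proof -
    have "coeff (P i' j' k') (E i0 j0 k0) = (\<Sum>i\<in>A i'. \<Sum>j\<in>B j'. \<Sum>k\<in>C k'. if i = i0 \<and> j = j0 \<and> k = k0 then t i j k else 0)"
      unfolding P_def coeff_sum coeff_monom
      apply (intro sum.cong refl)
      using Einj that unfolding A_def B_def C_def by auto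
    also have "\<dots> = (\<Sum>i\<in>A i'. if i = i0 then (\<Sum>j\<in>B j'. if j = j0 then (\<Sum>k\<in>C k'. if k = k0 then t i j k else 0) else 0) else 0)"
    proof (intro sum.cong refl)
      fix i assume "i \<in> A i'"
      show "(\<Sum>j\<in>B j'. \<Sum>k\<in>C k'. if i = i0 \<and> j = j0 \<and> k = k0 then t i j k else 0) =
        (if i = i0 then (\<Sum>j\<in>B j'. if j = j0 then (\<Sum>k\<in>C k'. if k = k0 then t i j k else 0) else 0) else 0)"
      proof (cases "i = i0")
        case True
        show ?thesis unfolding True by (simp, intro sum.cong refl) simp
      qed simp
    qed
    also have "\<dots> = t i0 j0 k0" using that finABC by simp
    finally show ?thesis .
  qed
  define Bad where "Bad = (\<Union>s\<in>{s \<in> I' \<times> J' \<times> K'. P (fst s) (fst (snd s)) (snd (snd s)) \<noteq> 0}.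
                            {x. poly (P (fst s) (fst (snd s)) (snd (snd s))) x = 0})"
  have "finite Bad" unfolding Bad_def using fin
    by (intro finite_UN_I) (auto intro: poly_roots_finite)
  then obtain x :: 'a where x: "x \<notin> Bad" using inf ex_new_if_finite by blast
  define u where "u i = x ^ n i" for i
  define v where "v j = x ^ (M * m j)" for j
  define w where "w k = x ^ (M * M * p k)" for k
  define t' where "t' i' j' k' = (\<Sum>i\<in>A i'. \<Sum>j\<in>B j'. \<Sum>k\<in>C k'. u i * v j * w k * t i j k)" for i' j' k'
  have polyP: "poly (P i' j' k') x = t' i' j' k'" for i' j' k'
    unfolding P_def t'_def poly_sum poly_monom u_def v_def w_def E_def
    by (intro sum.cong refl) (simp add: power_add mult_ac)
  have supp: "tsupp I' J' K' t' = (\<lambda>(i,j,k). (f i, g j, h k)) ` tsupp I J K t"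
  proof (intro equalityI subsetI)
    fix s assume s: "s \<in> tsupp I' J' K' t'"
    obtain i' j' k' where s': "s = (i',j',k')" by (cases s) auto
    have in': "i' \<in> I'" "j' \<in> J'" "k' \<in> K'" and nz: "t' i' j' k' \<noteq> 0"
      using s unfolding s' tsupp_def by auto
    then obtain i j k where ijk: "i \<in> A i'" "j \<in> B j'" "k \<in> C k'" "t i j k \<noteq> 0"
      unfolding t'_def by (metis (no_types, lifting) mult_zero_right sum.neutral)
    then show "s \<in> (\<lambda>(i,j,k). (f i, g j, h k)) ` tsupp I J K t"
      unfolding s' tsupp_def A_def B_def C_def by (auto intro!: image_eqI[where x="(i,j,k)"])
  next
    fix s assume "s \<in> (\<lambda>(i,j,k). (f i, g j, h k)) ` tsupp I J K t"
    then obtain i j k where ijk: "i \<in> I" "j \<in> J" "k \<in> K" "t i j k \<noteq> 0"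
      and s': "s = (f i, g j, h k)" unfolding tsupp_def by auto
    have in': "f i \<in> I'" "g j \<in> J'" "h k \<in> K'" using im ijk by auto
    have "coeff (P (f i) (g j) (h k)) (E i j k) \<noteq> 0"
      using coeffP[of i "f i" j "g j" k "h k"] ijk unfolding A_def B_def C_def by auto
    then have "P (f i) (g j) (h k) \<noteq> 0" by auto
    then have "poly (P (f i) (g j) (h k)) x \<noteq> 0" using x in' unfolding Bad_def by auto
    then show "s \<in> tsupp I' J' K' t'" using polyP in' unfolding s' tsupp_def by auto
  qed
  obtain a b c where abc: "\<forall>i\<in>I. \<forall>j\<in>J. \<forall>k\<in>K. t i j k = (\<Sum>l<L. a l i * b l j * c l k)"
    using rk unfolding rank_le_def by blast
  define a' where "a' l i' = (\<Sum>i\<in>A i'. u i * a l i)" for l i'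
  define b' where "b' l j' = (\<Sum>j\<in>B j'. v j * b l j)" for l j'
  define c' where "c' l k' = (\<Sum>k\<in>C k'. w k * c l k)" for l k'
  have "t' i' j' k' = (\<Sum>l<L. a' l i' * b' l j' * c' l k')" for i' j' k'
  proof -
    have "(\<Sum>l<L. a' l i' * b' l j' * c' l k') =
          (\<Sum>l<L. \<Sum>i\<in>A i'. \<Sum>j\<in>B j'. \<Sum>k\<in>C k'. u i * v j * w k * (a l i * b l j * c l k))"
      unfolding a'_def b'_def c'_def triple_prod
      by (intro sum.cong refl) (simp add: mult_ac)
    also have "\<dots> = (\<Sum>i\<in>A i'. \<Sum>j\<in>B j'. \<Sum>k\<in>C k'. \<Sum>l<L. u i * v j * w k * (a l i * b l j * c l k))"
      unfolding atLeast0LessThan[symmetric] by (rule swap4)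
    also have "\<dots> = t' i' j' k'"
      unfolding t'_def sum_distrib_left[symmetric]
      using abc unfolding A_def B_def C_def by (intro sum.cong refl) auto
    finally show ?thesis by simp
  qed
  then have "rank_le I' J' K' t' L" unfolding rank_le_def by blast
  with supp show ?thesis by blast
qed

theorem proposition3p2:
  fixes I :: "'i set" and J :: "'j set" and K :: "'k set"
    and I' :: "'i2 set" and J' :: "'j2 set" and K' :: "'k2 set"
    and f :: "'i \<Rightarrow> 'i2" and g :: "'j \<Rightarrow> 'j2" and h :: "'k \<Rightarrow> 'k2"
    and \<Phi> :: "('i \<times> 'j \<times> 'k) set"
  assumes "infinite (UNIV :: 'a::field set)"
    and "finite I" "finite J" "finite K" "finite I'" "finite J'" "finite K'"
    and "\<Phi> \<subseteq> I \<times> J \<times> K"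
    and "f ` I \<subseteq> I'" "g ` J \<subseteq> J'" "h ` K \<subseteq> K'"
  shows "support_rank TYPE('a) I J K \<Phi> \<ge>
         support_rank TYPE('a) I' J' K' ((\<lambda>(i,j,k). (f i, g j, h k)) ` \<Phi>)"
proof -
  define t0 :: "'i \<Rightarrow> 'j \<Rightarrow> 'k \<Rightarrow> 'a" where "t0 i j k = (if (i,j,k) \<in> \<Phi> then 1 else 0)" for i j k
  have "tsupp I J K t0 = \<Phi>" using assms(8) unfolding tsupp_def t0_def by auto
  then have ex: "\<exists>r. \<exists>t :: 'i \<Rightarrow> 'j \<Rightarrow> 'k \<Rightarrow> 'a. tsupp I J K t = \<Phi> \<and> tensor_rank I J K t = r" by blast
  obtain t :: "'i \<Rightarrow> 'j \<Rightarrow> 'k \<Rightarrow> 'a" where t: "tsupp I J K t = \<Phi>"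
    "tensor_rank I J K t = support_rank TYPE('a) I J K \<Phi>"
    using LeastI_ex[OF ex] unfolding support_rank_def by blast
  have "rank_le I J K t (tensor_rank I J K t)"
    unfolding tensor_rank_def using LeastI_ex finite_rank[OF assms(2-4), of t] by metis
  then obtain t' :: "'i2 \<Rightarrow> 'j2 \<Rightarrow> 'k2 \<Rightarrow> 'a" where t': "tsupp I' J' K' t' = (\<lambda>(i,j,k). (f i, g j, h k)) ` \<Phi>"
    "rank_le I' J' K' t' (tensor_rank I J K t)"
    using key[OF assms(1-7) assms(9-11)] t(1) by blast
  have "tensor_rank I' J' K' t' \<le> tensor_rank I J K t"
    unfolding tensor_rank_def[of I' J' K' t'] by (rule Least_le) (rule t'(2))
  moreover have "support_rank TYPE('a) I' J' K' ((\<lambda>(i,j,k). (f i, g j, h k)) ` \<Phi>) \<le> tensor_rank I' J' K' t'"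
    unfolding support_rank_def by (rule Least_le) (use t'(1) in blast)
  ultimately show ?thesis using t(2) by linarith
qed

end
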